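(* Let $G$ be a finite group, let $\pi$ be a set of primes, let $q\in\pi$ and let $Q$ be a Sylow $q$-subgroup of $G$. Let $\mathcal{S}_{q'}(G_\pi)$ denote the union of all conjugacy classes $g^G$ with $g$ a $\pi$-element of $G$ such that $|g^G|$ is not divisible by $q$. If $\mathbf{Z}(Q)\le\mathbf{Z}(G)$ and $C_G(Q)$ has a normal Hall $\pi$-subgroup, then $|\mathbf{Z}(G)|_q=|\mathcal{S}_{q'}(G_\pi)|_q$.
   Context: A $\pi$-element is an element whose order is divisible only by primes in $\pi$. For a positive integer $n$ and prime $q$, $n_q$ denotes the largest power of $q$ dividing $n$. $|g^G|=|G:C_G(g)|$ is the size of the conjugacy class of $g$. *)

theory Defs
  imports "HOL-Algebra.Algebra" "HOL-Computational_Algebra.Primes"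
begin

definition q_part :: "nat \<Rightarrow> nat \<Rightarrow> nat" where
  "q_part q n = q ^ multiplicity q n"

definition centralizer :: "('a, 'b) monoid_scheme \<Rightarrow> 'a set \<Rightarrow> 'a set" where
  "centralizer G S = {g \<in> carrier G. \<forall>s\<in>S. g \<otimes>\<^bsub>G\<^esub> s = s \<otimes>\<^bsub>G\<^esub> g}"

definition center :: "('a, 'b) monoid_scheme \<Rightarrow> 'a set" where
  "center G = centralizer G (carrier G)"

definition conj_class :: "('a, 'b) monoid_scheme \<Rightarrow> 'a \<Rightarrow> 'a set" where
  "conj_class G g = {x \<otimes>\<^bsub>G\<^esub> g \<otimes>\<^bsub>G\<^esub> inv\<^bsub>G\<^esub> x | x. x \<in> carrier G}"

definition pi_number :: "nat set \<Rightarrow> nat \<Rightarrow> bool" where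
  "pi_number \<pi> n \<longleftrightarrow> (\<forall>p. Factorial_Ring.prime p \<longrightarrow> p dvd n \<longrightarrow> p \<in> \<pi>)"

definition pi_element :: "('a, 'b) monoid_scheme \<Rightarrow> nat set \<Rightarrow> 'a \<Rightarrow> bool" where
  "pi_element G \<pi> g \<longleftrightarrow> g \<in> carrier G \<and> pi_number \<pi> (group.ord G g)"

definition sylow_subgroup :: "('a, 'b) monoid_scheme \<Rightarrow> nat \<Rightarrow> 'a set \<Rightarrow> bool" where
  "sylow_subgroup G q Q \<longleftrightarrow> subgroup Q G \<and> card Q = q_part q (order G)"

definition hall_subgroup :: "('a, 'b) monoid_scheme \<Rightarrow> nat set \<Rightarrow> 'a set \<Rightarrow> 'a set \<Rightarrow> bool" where
  "hall_subgroup G \<pi> K H \<longleftrightarrow> subgroup H G \<and> H \<subseteq> K \<and>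
     pi_number \<pi> (card H) \<and> (\<forall>p\<in>\<pi>. \<not> p dvd (card K div card H))"

definition normal_in :: "('a, 'b) monoid_scheme \<Rightarrow> 'a set \<Rightarrow> 'a set \<Rightarrow> bool" where
  "normal_in G H K \<longleftrightarrow> H \<subseteq> K \<and> (\<forall>k\<in>K. \<forall>h\<in>H. k \<otimes>\<^bsub>G\<^esub> h \<otimes>\<^bsub>G\<^esub> inv\<^bsub>G\<^esub> k \<in> H)"

definition S_qprime_pi :: "('a, 'b) monoid_scheme \<Rightarrow> nat set \<Rightarrow> nat \<Rightarrow> 'a set" where
  "S_qprime_pi G \<pi> q = \<Union>{conj_class G g | g. pi_element G \<pi> g \<and> \<not> q dvd card (conj_class G g)}"

end

theory Submission
  imports Defs
begin


lemma action_is_group_action: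
  assumes grp: "group A"
  and cl: "\<And>g x. g \<in> carrier A \<Longrightarrow> x \<in> E \<Longrightarrow> \<phi> g x \<in> E"
  and one: "\<And>x. x \<in> E \<Longrightarrow> \<phi> \<one>\<^bsub>A\<^esub> x = x"
  and comp: "\<And>g h x. g \<in> carrier A \<Longrightarrow> h \<in> carrier A \<Longrightarrow> x \<in> E \<Longrightarrow> \<phi> (g \<otimes>\<^bsub>A\<^esub> h) x = \<phi> g (\<phi> h x)"
  shows "group_action A E (\<lambda>g. \<lambda>x\<in>E. \<phi> g x)"
proof -
  interpret A: group A by (rule grp)
  have bij: "(\<lambda>x\<in>E. \<phi> g x) \<in> Bij E" if g: "g \<in> carrier A" for g
  proof -
    have inv1: "\<phi> (inv\<^bsub>A\<^esub> g) (\<phi> g x) = x" if "x \<in> E" for x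
      using comp[of "inv\<^bsub>A\<^esub> g" g x] one[of x] g that by simp
    have inv2: "\<phi> g (\<phi> (inv\<^bsub>A\<^esub> g) x) = x" if "x \<in> E" for x
      using comp[of g "inv\<^bsub>A\<^esub> g" x] one[of x] g that by simp
    have "bij_betw (\<lambda>x\<in>E. \<phi> g x) E E"
      unfolding bij_betw_def
    proof
      show "inj_on (\<lambda>x\<in>E. \<phi> g x) E"
        by (intro inj_onI) (metis inv1 restrict_apply')
      show "(\<lambda>x\<in>E. \<phi> g x) ` E = E"
      proof
        show "(\<lambda>x\<in>E. \<phi> g x) ` E \<subseteq> E" using cl g by auto
        show "E \<subseteq> (\<lambda>x\<in>E. \<phi> g x) ` E"
        proof
          fix x assume x: "x \<in> E"
          have "\<phi> (inv\<^bsub>A\<^esub> g) x \<in> E" using cl g x by simp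
          then show "x \<in> (\<lambda>x\<in>E. \<phi> g x) ` E" using inv2[OF x]
            by (metis image_eqI restrict_apply')
        qed
      qed
    qed
    then show ?thesis unfolding Bij_def by auto
  qed
  show ?thesis
    unfolding group_action_def group_hom_def group_hom_axioms_def
  proof (intro conjI)
    show "group A" by (rule grp)
    show "group (BijGroup E)" by (rule group_BijGroup)
    show "(\<lambda>g. \<lambda>x\<in>E. \<phi> g x) \<in> hom A (BijGroup E)"
    proof (rule homI)
      fix g assume "g \<in> carrier A"
      then show "(\<lambda>x\<in>E. \<phi> g x) \<in> carrier (BijGroup E)"
        using bij by (simp add: BijGroup_def)
    next
      fix g h assume g: "g \<in> carrier A" and h: "h \<in> carrier A"
      have "(\<lambda>x\<in>E. \<phi> (g \<otimes>\<^bsub>A\<^esub> h) x) = compose E (\<lambda>x\<in>E. \<phi> g x) (\<lambda>x\<in>E. \<phi> h x)"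
        using comp[OF g h] cl[OF h] by (auto simp: compose_def)
      then show "(\<lambda>x\<in>E. \<phi> (g \<otimes>\<^bsub>A\<^esub> h) x) =
          (\<lambda>x\<in>E. \<phi> g x) \<otimes>\<^bsub>BijGroup E\<^esub> (\<lambda>x\<in>E. \<phi> h x)"
        using bij[OF g] bij[OF h] by (simp add: BijGroup_def)
    qed
  qed
qed

lemma action_orbit_stab:
  assumes grp: "group A" and fin: "finite (carrier A)"
  and cl: "\<And>g x. g \<in> carrier A \<Longrightarrow> x \<in> E \<Longrightarrow> \<phi> g x \<in> E"
  and one: "\<And>x. x \<in> E \<Longrightarrow> \<phi> \<one>\<^bsub>A\<^esub> x = x"
  and comp: "\<And>g h x. g \<in> carrier A \<Longrightarrow> h \<in> carrier A \<Longrightarrow> x \<in> E \<Longrightarrow> \<phi> (g \<otimes>\<^bsub>A\<^esub> h) x = \<phi> g (\<phi> h x)"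
  and x: "x \<in> E"
  shows "card {\<phi> g x | g. g \<in> carrier A} * card {g \<in> carrier A. \<phi> g x = x} = order A"
proof -
  interpret group_action A E "\<lambda>g. \<lambda>x\<in>E. \<phi> g x"
    by (rule action_is_group_action[OF grp cl one comp])
  have "orbit A (\<lambda>g. \<lambda>x\<in>E. \<phi> g x) x = {\<phi> g x | g. g \<in> carrier A}"
    unfolding orbit_def using x by simp
  moreover have "stabilizer A (\<lambda>g. \<lambda>x\<in>E. \<phi> g x) x = {g \<in> carrier A. \<phi> g x = x}"
    unfolding stabilizer_def using x by simp
  ultimately show ?thesis using orbit_stabilizer_theorem[OF x] by simp
qed

lemma action_fix_mod:
  assumes grp: "group A" and fin: "finite (carrier A)"
  and q: "Factorial_Ring.prime (q::nat)" and ordA: "order A = q ^ k"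
  and finE: "finite E"
  and cl: "\<And>g x. g \<in> carrier A \<Longrightarrow> x \<in> E \<Longrightarrow> \<phi> g x \<in> E"
  and one: "\<And>x. x \<in> E \<Longrightarrow> \<phi> \<one>\<^bsub>A\<^esub> x = x"
  and comp: "\<And>g h x. g \<in> carrier A \<Longrightarrow> h \<in> carrier A \<Longrightarrow> x \<in> E \<Longrightarrow> \<phi> (g \<otimes>\<^bsub>A\<^esub> h) x = \<phi> g (\<phi> h x)"
  shows "card E mod q = card {x \<in> E. \<forall>g\<in>carrier A. \<phi> g x = x} mod q"
proof -
  define \<Psi> where "\<Psi> = (\<lambda>g. \<lambda>x\<in>E. \<phi> g x)"
  interpret group_action A E \<Psi>
    unfolding \<Psi>_def by (rule action_is_group_action[OF grp cl one comp])
  define F where "F = {x \<in> E. \<forall>g\<in>carrier A. \<phi> g x = x}"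
  have orb: "orbit A \<Psi> x = {\<phi> g x | g. g \<in> carrier A}" if "x \<in> E" for x
    unfolding orbit_def \<Psi>_def using that by simp
  have orbfin: "finite (orbit A \<Psi> x)" if "x \<in> E" for x
    using orb[OF that] fin by simp
  have xin: "x \<in> orbit A \<Psi> x" if "x \<in> E" for x
    using orb[OF that] one[OF that] grp group.is_monoid monoid.one_closed by fastforce
  have orbsub: "orbit A \<Psi> x \<subseteq> E" if "x \<in> E" for x
    using orb[OF that] cl that by auto
  have pw: "\<exists>i. card (orbit A \<Psi> x) = q ^ i" if "x \<in> E" for x
  proof -
    have "card (orbit A \<Psi> x) dvd q ^ k"
      using orbit_stabilizer_theorem[OF that] ordA by (metis dvd_triv_left)
    then show ?thesis using divides_primepow_nat[OF q] by blast
  qed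
  have c1: "card (orbit A \<Psi> x) = 1 \<longleftrightarrow> x \<in> F" if "x \<in> E" for x
  proof
    assume "card (orbit A \<Psi> x) = 1"
    then obtain y where y: "orbit A \<Psi> x = {y}" by (meson card_1_singletonE)
    then have "y = x" using xin[OF that] by auto
    then show "x \<in> F" using y orb[OF that] that unfolding F_def by blast
  next
    assume "x \<in> F"
    then have "orbit A \<Psi> x = {x}" using orb[OF that] xin[OF that] unfolding F_def by auto
    then show "card (orbit A \<Psi> x) = 1" by simp
  qed
  have modq: "card Ob mod q = (if card Ob = 1 then 1 else 0)" if Obin: "Ob \<in> orbits A E \<Psi>" for Ob
  proof -
    obtain x where x: "x \<in> E" "Ob = orbit A \<Psi> x" using Obin unfolding orbits_def by blast
    obtain i where i: "card Ob = q ^ i" using pw x by blast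
    have q1: "q > 1" using q prime_gt_1_nat by blast
    show ?thesis
    proof (cases i)
      case 0 then show ?thesis using i q1 by simp
    next
      case (Suc j) then show ?thesis using i q1 by simp
    qed
  qed
  have finO: "finite (orbits A E \<Psi>)"
    unfolding orbits_def using finE by simp
  have "card E = (\<Sum>Ob\<in>orbits A E \<Psi>. card Ob)"
    using disjoint_sum[OF finE, of "\<lambda>_. 1::nat"] by simp
  then have "card E mod q = (\<Sum>Ob\<in>orbits A E \<Psi>. card Ob mod q) mod q"
    by (simp add: mod_sum_eq)
  also have "(\<Sum>Ob\<in>orbits A E \<Psi>. card Ob mod q) = (\<Sum>Ob\<in>orbits A E \<Psi>. if card Ob = 1 then 1 else 0)"
    using modq by (intro sum.cong) auto
  also have "\<dots> = card {Ob \<in> orbits A E \<Psi>. card Ob = 1}"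
    using finO by (simp add: sum.If_cases Int_def conj_commute)
  also have "{Ob \<in> orbits A E \<Psi>. card Ob = 1} = (\<lambda>x. {x}) ` F"
  proof
    show "{Ob \<in> orbits A E \<Psi>. card Ob = 1} \<subseteq> (\<lambda>x. {x}) ` F"
    proof
      fix Ob assume Ob: "Ob \<in> {Ob \<in> orbits A E \<Psi>. card Ob = 1}"
      then obtain x where x: "x \<in> E" "Ob = orbit A \<Psi> x" unfolding orbits_def by blast
      then have "x \<in> F" using c1 Ob by auto
      moreover have "Ob = {x}" using Ob x xin[OF x(1)] by (metis (mono_tags, lifting) card_1_singletonE mem_Collect_eq singletonD)
      ultimately show "Ob \<in> (\<lambda>x. {x}) ` F" by blast
    qed
    show "(\<lambda>x. {x}) ` F \<subseteq> {Ob \<in> orbits A E \<Psi>. card Ob = 1}"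
    proof
      fix Ob assume "Ob \<in> (\<lambda>x. {x}) ` F"
      then obtain x where x: "x \<in> F" "Ob = {x}" by blast
      have xE: "x \<in> E" using x F_def by simp
      have "orbit A \<Psi> x = {x}" using c1[OF xE] x xin[OF xE] 
        by (metis card_1_singletonE singletonD)
      then show "Ob \<in> {Ob \<in> orbits A E \<Psi>. card Ob = 1}"
        using x xE unfolding orbits_def by auto
    qed
  qed
  also have "card ((\<lambda>x. {x}) ` F) = card F"
    by (rule card_image) (simp add: inj_on_def)
  finally show ?thesis unfolding F_def .
qed




lemma (in group) inv_cancel_l1: "a \<in> carrier G \<Longrightarrow> s \<in> carrier G \<Longrightarrow> inv a \<otimes> (a \<otimes> s) = s"
  by (simp add: m_assoc[symmetric])
lemma (in group) inv_cancel_l2: "a \<in> carrier G \<Longrightarrow> s \<in> carrier G \<Longrightarrow> a \<otimes> (inv a \<otimes> s) = s"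
  by (simp add: m_assoc[symmetric])
lemmas (in group) gsimps = m_assoc inv_cancel_l1 inv_cancel_l2 inv_mult_group

lemma (in group) centralizer_subgroup:
  assumes "W \<subseteq> carrier G"
  shows "subgroup (centralizer G W) G"
proof (rule subgroupI)
  show "centralizer G W \<subseteq> carrier G" unfolding centralizer_def by auto
  have "\<one> \<in> centralizer G W" unfolding centralizer_def using assms by auto
  then show "centralizer G W \<noteq> {}" by blast
  fix a b assume a: "a \<in> centralizer G W" and b: "b \<in> centralizer G W"
  have ac: "a \<in> carrier G" and bc: "b \<in> carrier G" using a b unfolding centralizer_def by auto
  show "inv a \<in> centralizer G W"
    unfolding centralizer_def
  proof (intro CollectI conjI ballI)
    show "inv a \<in> carrier G" using ac by simp
    fix s assume s: "s \<in> W"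
    then have sc: "s \<in> carrier G" using assms by auto
    have "a \<otimes> s = s \<otimes> a" using a s unfolding centralizer_def by auto
    then have "inv a \<otimes> (a \<otimes> s) \<otimes> inv a = inv a \<otimes> (s \<otimes> a) \<otimes> inv a" by simp
    then show "inv a \<otimes> s = s \<otimes> inv a"
      using ac sc by (simp add: gsimps)
  qed
  show "a \<otimes> b \<in> centralizer G W"
    unfolding centralizer_def
  proof (intro CollectI conjI ballI)
    show "a \<otimes> b \<in> carrier G" using ac bc by simp
    fix s assume s: "s \<in> W"
    then have sc: "s \<in> carrier G" using assms by auto
    have "a \<otimes> s = s \<otimes> a" "b \<otimes> s = s \<otimes> b" using a b s unfolding centralizer_def by auto
    then have "a \<otimes> b \<otimes> s = a \<otimes> (s \<otimes> b)" using ac bc sc by (simp add: m_assoc)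
    also have "\<dots> = (a \<otimes> s) \<otimes> b" using ac bc sc by (simp add: m_assoc)
    also have "\<dots> = s \<otimes> (a \<otimes> b)" using ac bc sc \<open>a \<otimes> s = s \<otimes> a\<close> by (simp add: m_assoc)
    finally show "a \<otimes> b \<otimes> s = s \<otimes> (a \<otimes> b)" .
  qed
qed

lemma (in group) card_union_cosets:
  assumes fin: "finite (carrier G)" and Z: "subgroup Z G" and T: "T \<subseteq> carrier G"
    and cl: "\<And>t. t \<in> T \<Longrightarrow> Z #> t \<subseteq> T"
  shows "card T = card {Z #> t | t. t \<in> T} * card Z"
proof -
  define E where "E = {Z #> t | t. t \<in> T}"
  have Zc: "Z \<subseteq> carrier G" using Z subgroup.subset by blast
  have sub: "E \<subseteq> rcosets Z"
  proof
    fix Y assume "Y \<in> E"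
    then obtain t where "t \<in> T" "Y = Z #> t" unfolding E_def by blast
    then show "Y \<in> rcosets Z" using rcosetsI[OF Zc] T by blast
  qed
  have un: "\<Union>E = T"
  proof
    show "\<Union>E \<subseteq> T" using cl unfolding E_def by blast
    show "T \<subseteq> \<Union>E"
    proof
      fix t assume t: "t \<in> T"
      then have "t \<in> Z #> t" using rcos_self[OF _ Z] T by blast
      then show "t \<in> \<Union>E" using t unfolding E_def by blast
    qed
  qed
  have pw: "pairwise disjnt E"
    using pairwise_subset[OF rcos_disjoint[OF Z] sub] .
  have cz: "\<forall>Y\<in>E. card Y = card Z"
  proof
    fix Y assume "Y \<in> E"
    then have "Y \<in> rcosets Z" using sub by blast
    then show "card Y = card Z" using card_rcosets_equal[OF _ Zc] by simp
  qed
  have fz: "\<forall>Y\<in>E. finite Y"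
  proof
    fix Y assume "Y \<in> E"
    then obtain t where "t \<in> T" "Y = Z #> t" unfolding E_def by blast
    then have "Y \<subseteq> carrier G" using r_coset_subset_G[OF Zc] T by blast
    then show "finite Y" using fin finite_subset by blast
  qed
  have "card T = sum card E" using card_Union_disjoint[OF pw] fz un by simp
  also have "\<dots> = sum (\<lambda>_. card Z) E" using cz by (intro sum.cong) auto
  also have "\<dots> = card E * card Z" by simp
  finally show ?thesis unfolding E_def .
qed

lemma (in group) conj_pow:
  assumes "x \<in> carrier G" "g \<in> carrier G"
  shows "(x \<otimes> g \<otimes> inv x) [^] (n::nat) = x \<otimes> g [^] n \<otimes> inv x"
proof (induction n)
  case 0 then show ?case using assms by simp
next
  case (Suc n)
  have "(x \<otimes> g \<otimes> inv x) [^] Suc n = (x \<otimes> g [^] n \<otimes> inv x) \<otimes> (x \<otimes> g \<otimes> inv x)"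
    using Suc by simp
  also have "\<dots> = x \<otimes> (g [^] n \<otimes> g) \<otimes> inv x"
    using assms by (simp add: gsimps)
  finally show ?case by simp
qed

lemma (in group) ord_conj:
  assumes "x \<in> carrier G" "g \<in> carrier G"
  shows "ord (x \<otimes> g \<otimes> inv x) = ord g"
proof -
  have "(x \<otimes> g \<otimes> inv x) [^] (n::nat) = \<one> \<longleftrightarrow> g [^] n = \<one>" for n
  proof
    assume "(x \<otimes> g \<otimes> inv x) [^] n = \<one>"
    then have "x \<otimes> g [^] n \<otimes> inv x = \<one>" using conj_pow assms by simp
    then have "inv x \<otimes> (x \<otimes> g [^] n \<otimes> inv x) \<otimes> x = inv x \<otimes> \<one> \<otimes> x" by simp
    then show "g [^] n = \<one>" using assms by (simp add: gsimps)
  next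
    assume "g [^] n = \<one>"
    then show "(x \<otimes> g \<otimes> inv x) [^] n = \<one>" using conj_pow assms by simp
  qed
  then show ?thesis using assms by (simp add: ord_unique pow_eq_id)
qed

lemma (in group) conj_class_conj:
  assumes "x \<in> carrier G" "g \<in> carrier G"
  shows "conj_class G (x \<otimes> g \<otimes> inv x) = conj_class G g"
proof
  show "conj_class G (x \<otimes> g \<otimes> inv x) \<subseteq> conj_class G g"
  proof
    fix a assume "a \<in> conj_class G (x \<otimes> g \<otimes> inv x)"
    then obtain y where y: "y \<in> carrier G" "a = y \<otimes> (x \<otimes> g \<otimes> inv x) \<otimes> inv y"
      unfolding conj_class_def by blast
    then have "a = (y \<otimes> x) \<otimes> g \<otimes> inv (y \<otimes> x)" using assms by (simp add: gsimps)
    then show "a \<in> conj_class G g" unfolding conj_class_def using y assms by blast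
  qed
  show "conj_class G g \<subseteq> conj_class G (x \<otimes> g \<otimes> inv x)"
  proof
    fix a assume "a \<in> conj_class G g"
    then obtain y where y: "y \<in> carrier G" "a = y \<otimes> g \<otimes> inv y"
      unfolding conj_class_def by blast
    then have "a = (y \<otimes> inv x) \<otimes> (x \<otimes> g \<otimes> inv x) \<otimes> inv (y \<otimes> inv x)"
      using assms by (simp add: gsimps)
    then show "a \<in> conj_class G (x \<otimes> g \<otimes> inv x)" unfolding conj_class_def using y assms by blast
  qed
qed

lemma (in group) card_conj_class:
  assumes fin: "finite (carrier G)" and g: "g \<in> carrier G"
  shows "card (conj_class G g) * card (centralizer G {g}) = order G"
proof -
  have "card {(\<lambda>x a. x \<otimes> a \<otimes> inv x) y g | y. y \<in> carrier G} *
        card {y \<in> carrier G. (\<lambda>x a. x \<otimes> a \<otimes> inv x) y g = g} = order G"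
  proof (rule action_orbit_stab[OF is_group fin, where E = "carrier G"])
    show "\<And>y x. y \<in> carrier G \<Longrightarrow> x \<in> carrier G \<Longrightarrow> y \<otimes> x \<otimes> inv y \<in> carrier G" by simp
    show "\<And>x. x \<in> carrier G \<Longrightarrow> \<one> \<otimes> x \<otimes> inv \<one> = x" by simp
    show "\<And>y h x. y \<in> carrier G \<Longrightarrow> h \<in> carrier G \<Longrightarrow> x \<in> carrier G \<Longrightarrow>
       y \<otimes> h \<otimes> x \<otimes> inv (y \<otimes> h) = y \<otimes> (h \<otimes> x \<otimes> inv h) \<otimes> inv y"
      by (simp add: gsimps)
    show "g \<in> carrier G" by (rule g)
  qed
  moreover have "{(\<lambda>x a. x \<otimes> a \<otimes> inv x) y g | y. y \<in> carrier G} = conj_class G g"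
    unfolding conj_class_def by simp
  moreover have "{y \<in> carrier G. (\<lambda>x a. x \<otimes> a \<otimes> inv x) y g = g} = centralizer G {g}"
  proof -
    have "y \<otimes> g \<otimes> inv y = g \<longleftrightarrow> y \<otimes> g = g \<otimes> y" if "y \<in> carrier G" for y
    proof
      assume "y \<otimes> g \<otimes> inv y = g"
      then have "y \<otimes> g \<otimes> inv y \<otimes> y = g \<otimes> y" by simp
      then show "y \<otimes> g = g \<otimes> y" using that g by (simp add: gsimps)
    next
      assume "y \<otimes> g = g \<otimes> y"
      then have "y \<otimes> g \<otimes> inv y = g \<otimes> y \<otimes> inv y" by simp
      then show "y \<otimes> g \<otimes> inv y = g" using that g by (simp add: gsimps)
    qed
    then show ?thesis unfolding centralizer_def by auto
  qed
  ultimately show ?thesis by simp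
qed

lemma (in group) card_subgroup_dvd:
  assumes fin: "finite (carrier G)" and "subgroup A G" "subgroup B G" "A \<subseteq> B"
  shows "card A dvd card B"
proof -
  interpret B: group "G\<lparr>carrier := B\<rparr>" using subgroup_imp_group assms by blast
  have "subgroup A (G\<lparr>carrier := B\<rparr>)" using subgroup_incl assms by blast
  then have "card (rcosets\<^bsub>G\<lparr>carrier := B\<rparr>\<^esub> A) * card A = order (G\<lparr>carrier := B\<rparr>)"
    using B.lagrange by blast
  moreover have "order (G\<lparr>carrier := B\<rparr>) = card B" by (simp add: order_def)
  ultimately show ?thesis by (metis dvd_triv_right)
qed

lemma (in group) pow_card_subgroup:
  assumes fin: "finite (carrier G)" and A: "subgroup A G" and x: "x \<in> A"
  shows "x [^] card A = \<one>"
proof -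
  interpret A: group "G\<lparr>carrier := A\<rparr>" using subgroup_imp_group A by blast
  have "x [^]\<^bsub>G\<lparr>carrier := A\<rparr>\<^esub> order (G\<lparr>carrier := A\<rparr>) = \<one>\<^bsub>G\<lparr>carrier := A\<rparr>\<^esub>"
    using A.pow_order_eq_1 x by simp
  moreover have "order (G\<lparr>carrier := A\<rparr>) = card A" by (simp add: order_def)
  ultimately show ?thesis by (simp add: nat_pow_consistent[symmetric])
qed

lemma mult_not_dvd:
  assumes q: "Factorial_Ring.prime (q::nat)" and n: "n \<noteq> 0"
  shows "\<not> q ^ Suc (multiplicity q n) dvd n"
  using q n power_dvd_iff_le_multiplicity not_prime_unit by (metis Suc_n_not_le_n)

lemma qpart_mult:
  assumes q: "Factorial_Ring.prime (q::nat)" and e: "\<not> q dvd e"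
  shows "multiplicity q (e * q ^ j) = j"
proof (rule multiplicity_eqI)
  show "q ^ j dvd e * q ^ j" by simp
  show "\<not> q ^ Suc j dvd e * q ^ j"
    using e q by (simp add: power_Suc2 prime_gt_0_nat)
qed




lemma (in group) order_pos:
  assumes "finite (carrier G)" shows "order G \<noteq> 0"
  using assms unfolding order_def by (metis card_0_eq empty_iff one_closed)

lemma (in group) sylow_in:
  assumes fin: "finite (carrier G)" and q: "Factorial_Ring.prime (q::nat)" and K: "subgroup K G"
  shows "\<exists>R. subgroup R G \<and> R \<subseteq> K \<and> card R = q ^ multiplicity q (card K)"
proof -
  interpret K: group "G\<lparr>carrier := K\<rparr>" using subgroup_imp_group K by blast
  have finK: "finite K" using fin K subgroup.subset finite_subset by blast
  have oK: "order (G\<lparr>carrier := K\<rparr>) = card K" by (simp add: order_def)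
  have "card K = q ^ multiplicity q (card K) * (card K div q ^ multiplicity q (card K))"
    by (simp add: multiplicity_dvd)
  then obtain R where R: "subgroup R (G\<lparr>carrier := K\<rparr>)" "card R = q ^ multiplicity q (card K)"
    using sylow_thm[OF q K.is_group, of "multiplicity q (card K)"] oK finK by auto
  have "subgroup R G" using incl_subgroup[OF K R(1)] .
  moreover have "R \<subseteq> K" using R(1) subgroup.subset by fastforce
  ultimately show ?thesis using R(2) by blast
qed

lemma (in group) index_not_dvd:
  assumes fin: "finite (carrier G)" and q: "Factorial_Ring.prime (q::nat)"
    and "e * q ^ multiplicity q (order G) dvd order G"
  shows "\<not> q dvd e"
proof
  assume "q dvd e"
  then obtain k where k: "e = q * k" by (elim dvdE)
  have "e * q ^ multiplicity q (order G) = q ^ Suc (multiplicity q (order G)) * k"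
    using k by (simp add: power_Suc mult_ac)
  then have "q ^ Suc (multiplicity q (order G)) dvd order G"
    using assms(3) by (metis dvd_mult_left)
  then show False using mult_not_dvd[OF q order_pos[OF fin]] by blast
qed

lemma (in group) sylow_conj:
  assumes fin: "finite (carrier G)" and q: "Factorial_Ring.prime (q::nat)"
    and P: "subgroup P G" and Q: "subgroup Q G"
    and cP: "card P = q ^ multiplicity q (order G)" and cQ: "card Q = q ^ multiplicity q (order G)"
  shows "\<exists>a\<in>carrier G. (\<lambda>p. a \<otimes> p \<otimes> inv a) ` P = Q"
proof -
  interpret A: group "G\<lparr>carrier := P\<rparr>" using subgroup_imp_group P by blast
  have Pc: "P \<subseteq> carrier G" using P subgroup.subset by blast
  have Qc: "Q \<subseteq> carrier G" using Q subgroup.subset by blast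
  let ?\<phi> = "\<lambda>p T. T #> inv p"
  have "rcosets Q \<subseteq> Pow (carrier G)" using rcosets_part_G[OF Q] by blast
  then have finE: "finite (rcosets Q)" using fin finite_subset by blast
  have cl: "?\<phi> p T \<in> rcosets Q" if hp: "p \<in> carrier (G\<lparr>carrier := P\<rparr>)" and hT: "T \<in> rcosets Q" for p T
  proof -
    obtain x where x: "x \<in> carrier G" "T = Q #> x" using hT unfolding RCOSETS_def by blast
    have pc: "p \<in> carrier G" using hp Pc by auto
    have "T #> inv p = Q #> (x \<otimes> inv p)" using x pc Qc coset_mult_assoc by simp
    then show ?thesis using rcosetsI[OF Qc] x pc by simp
  qed
  have one: "?\<phi> \<one>\<^bsub>G\<lparr>carrier := P\<rparr>\<^esub> T = T" if "T \<in> rcosets Q" for T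
  proof -
    have "T \<subseteq> carrier G" using that rcosets_part_G[OF Q] by blast
    then show ?thesis by simp
  qed
  have comp: "?\<phi> (g \<otimes>\<^bsub>G\<lparr>carrier := P\<rparr>\<^esub> h) T = ?\<phi> g (?\<phi> h T)"
    if "g \<in> carrier (G\<lparr>carrier := P\<rparr>)" "h \<in> carrier (G\<lparr>carrier := P\<rparr>)" "T \<in> rcosets Q" for g h T
  proof -
    have gc: "g \<in> carrier G" "h \<in> carrier G" using that Pc by auto
    have "T \<subseteq> carrier G" using that rcosets_part_G[OF Q] by blast
    then show ?thesis using gc by (simp add: inv_mult_group coset_mult_assoc)
  qed
  have oA: "order (G\<lparr>carrier := P\<rparr>) = q ^ multiplicity q (order G)" using cP by (simp add: order_def)
  have finA: "finite (carrier (G\<lparr>carrier := P\<rparr>))" using fin Pc finite_subset by auto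
  have md: "card (rcosets Q) mod q = card {T \<in> rcosets Q. \<forall>g\<in>carrier (G\<lparr>carrier := P\<rparr>). ?\<phi> g T = T} mod q"
    by (rule action_fix_mod[OF A.is_group finA q oA finE cl one comp])
  have "card (rcosets Q) * card Q = order G" using lagrange[OF Q] .
  then have "\<not> q dvd card (rcosets Q)" using index_not_dvd[OF fin q] cQ by simp
  then have "card {T \<in> rcosets Q. \<forall>g\<in>carrier (G\<lparr>carrier := P\<rparr>). ?\<phi> g T = T} \<noteq> 0"
    using md by (metis dvd_eq_mod_eq_0 mod_0)
  then have "{T \<in> rcosets Q. \<forall>g\<in>carrier (G\<lparr>carrier := P\<rparr>). ?\<phi> g T = T} \<noteq> {}"
    by (metis card.empty)
  then obtain T where T: "T \<in> rcosets Q" "\<forall>g\<in>P. T #> inv g = T"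
    by auto
  obtain x where x: "x \<in> carrier G" "T = Q #> x" using T(1) unfolding RCOSETS_def by blast
  have inQ: "x \<otimes> p \<otimes> inv x \<in> Q" if p: "p \<in> P" for p
  proof -
    have ip: "inv p \<in> P" by (rule subgroup.m_inv_closed[OF P p])
    have pc: "p \<in> carrier G" by (rule subsetD[OF Pc p])
    have e1: "T #> inv (inv p) = T" using T(2) ip by blast
    have e2: "T #> inv (inv p) = Q #> (x \<otimes> p)"
      unfolding x(2) using x(1) pc Qc by (simp add: coset_mult_assoc)
    have "Q #> (x \<otimes> p) = T #> inv (inv p)" using e2 by simp
    also have "\<dots> = T" by (rule e1)
    also have "\<dots> = Q #> x" by (rule x(2))
    finally have "Q #> (x \<otimes> p) = Q #> x" .
    have xpc: "x \<otimes> p \<in> carrier G" using x(1) pc by simp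
    have "x \<otimes> p \<in> Q #> x" by (rule repr_independenceD[OF Q xpc]) (use \<open>Q #> (x \<otimes> p) = Q #> x\<close> in simp)
    then show ?thesis by (rule subgroup.rcos_module_imp[OF Q is_group x(1)])
  qed
  have sub: "(\<lambda>p. x \<otimes> p \<otimes> inv x) ` P \<subseteq> Q" using inQ by blast
  have inj: "inj_on (\<lambda>p. x \<otimes> p \<otimes> inv x) P"
  proof (rule inj_onI)
    fix p p' assume pp: "p \<in> P" "p' \<in> P" "x \<otimes> p \<otimes> inv x = x \<otimes> p' \<otimes> inv x"
    then have "inv x \<otimes> (x \<otimes> p \<otimes> inv x) \<otimes> x = inv x \<otimes> (x \<otimes> p' \<otimes> inv x) \<otimes> x" by simp
    moreover have "p \<in> carrier G" "p' \<in> carrier G" using pp(1,2) Pc by auto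
    ultimately show "p = p'" using x(1) by (simp add: gsimps)
  qed
  have finQ: "finite Q" using fin Qc finite_subset by blast
  have "card ((\<lambda>p. x \<otimes> p \<otimes> inv x) ` P) = card Q" using card_image[OF inj] cP cQ by simp
  then have "(\<lambda>p. x \<otimes> p \<otimes> inv x) ` P = Q" using card_subset_eq[OF finQ sub] by blast
  then show ?thesis using x(1) by blast
qed




lemma (in group) comm_inv_right:
  assumes "a \<in> carrier G" "x \<in> carrier G" "a \<otimes> x = x \<otimes> a"
  shows "a \<otimes> inv x = inv x \<otimes> a"
proof -
  have "inv x \<otimes> (a \<otimes> x) \<otimes> inv x = inv x \<otimes> (x \<otimes> a) \<otimes> inv x" using assms(3) by simp
  then show ?thesis using assms(1,2) by (simp add: gsimps)
qed

lemma (in group) qelem_in_sylow: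
  assumes fin: "finite (carrier G)" and q: "Factorial_Ring.prime (q::nat)"
    and x: "x \<in> carrier G" and xq: "x [^] (q ^ e) = \<one>"
    and P: "subgroup P G" and cP: "card P = q ^ multiplicity q (order G)"
    and comm: "\<And>p. p \<in> P \<Longrightarrow> x \<otimes> p = p \<otimes> x"
  shows "x \<in> P"
proof -
  define K where "K = centralizer G {x}"
  have Ksub: "subgroup K G" unfolding K_def by (rule centralizer_subgroup) (use x in simp)
  have Pc: "P \<subseteq> carrier G" using P subgroup.subset by blast
  have Kc: "K \<subseteq> carrier G" using Ksub subgroup.subset by blast
  have PK: "P \<subseteq> K"
  proof
    fix p assume p: "p \<in> P"
    have "p \<in> carrier G" by (rule subsetD[OF Pc p])
    moreover have "p \<otimes> x = x \<otimes> p" using comm[OF p] by simp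
    ultimately show "p \<in> K" unfolding K_def centralizer_def by simp
  qed
  have xK: "x \<in> K" unfolding K_def centralizer_def using x by simp
  define W where "W = generate G {x}"
  have Wsub: "subgroup W G" unfolding W_def by (rule generate_is_subgroup) (use x in simp)
  have WK: "W \<subseteq> K" unfolding W_def by (rule generate_subgroup_incl) (use xK Ksub in simp_all)
  have xW: "x \<in> W" unfolding W_def by (rule generate.incl) simp
  have "ord x dvd q ^ e" using xq pow_eq_id[OF x] by simp
  then obtain i where i: "ord x = q ^ i" using divides_primepow_nat[OF q] by blast
  have cW: "card W = q ^ i" unfolding W_def using generate_pow_card[OF x] i by simp
  interpret A: group "G\<lparr>carrier := W\<rparr>" using subgroup_imp_group Wsub by blast
  have oA: "order (G\<lparr>carrier := W\<rparr>) = q ^ i" using cW by (simp add: order_def)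
  have finA: "finite (carrier (G\<lparr>carrier := W\<rparr>))"
  proof -
    have "W \<subseteq> carrier G" using WK Kc by (rule subset_trans)
    then have "finite W" using fin finite_subset by blast
    then show ?thesis by simp
  qed
  define E where "E = {P #> a | a. a \<in> K}"
  let ?\<phi> = "\<lambda>w T. T #> inv w"
  have finE: "finite E"
  proof -
    have "E = (\<lambda>a. P #> a) ` K" unfolding E_def by blast
    moreover have "finite K" using fin Kc finite_subset by blast
    ultimately show ?thesis by simp
  qed
  have Esub: "T \<subseteq> carrier G" if hT: "T \<in> E" for T
  proof -
    obtain a where a: "a \<in> K" "T = P #> a" using hT unfolding E_def by blast
    have "a \<in> carrier G" by (rule subsetD[OF Kc a(1)])
    then show ?thesis using r_coset_subset_G[OF Pc] a(2) by simp
  qed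
  have cl: "?\<phi> w T \<in> E" if hw: "w \<in> carrier (G\<lparr>carrier := W\<rparr>)" and hT: "T \<in> E" for w T
  proof -
    obtain a where a: "a \<in> K" "T = P #> a" using hT unfolding E_def by blast
    have wK: "w \<in> K" using hw WK by auto
    have ac: "a \<in> carrier G" by (rule subsetD[OF Kc a(1)])
    have wc: "w \<in> carrier G" by (rule subsetD[OF Kc wK])
    have "T #> inv w = P #> (a \<otimes> inv w)" using a(2) ac wc Pc coset_mult_assoc by simp
    moreover have "a \<otimes> inv w \<in> K"
      by (rule subgroup.m_closed[OF Ksub a(1) subgroup.m_inv_closed[OF Ksub wK]])
    ultimately show ?thesis unfolding E_def by blast
  qed
  have one: "?\<phi> \<one>\<^bsub>G\<lparr>carrier := W\<rparr>\<^esub> T = T" if hT: "T \<in> E" for T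
    using Esub[OF hT] by simp
  have comp: "?\<phi> (g \<otimes>\<^bsub>G\<lparr>carrier := W\<rparr>\<^esub> h) T = ?\<phi> g (?\<phi> h T)"
    if hg: "g \<in> carrier (G\<lparr>carrier := W\<rparr>)" and hh: "h \<in> carrier (G\<lparr>carrier := W\<rparr>)" and hT: "T \<in> E" for g h T
  proof -
    have gc: "g \<in> carrier G" "h \<in> carrier G" using hg hh WK Kc by auto
    then show ?thesis using Esub[OF hT] by (simp add: inv_mult_group coset_mult_assoc)
  qed
  have md: "card E mod q = card {T \<in> E. \<forall>g\<in>carrier (G\<lparr>carrier := W\<rparr>). ?\<phi> g T = T} mod q"
    by (rule action_fix_mod[OF A.is_group finA q oA finE cl one comp])
  have cK: "card K = card E * card P"
    unfolding E_def
  proof (rule card_union_cosets[OF fin P Kc])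
    fix t assume t: "t \<in> K"
    show "P #> t \<subseteq> K"
    proof
      fix y assume "y \<in> P #> t"
      then obtain h where h: "h \<in> P" "y = h \<otimes> t" unfolding r_coset_def by blast
      have "h \<in> K" using h(1) PK by blast
      then have "h \<otimes> t \<in> K" by (rule subgroup.m_closed[OF Ksub _ t])
      then show "y \<in> K" using h(2) by simp
    qed
  qed
  have "card K dvd card (carrier G)"
    by (rule card_subgroup_dvd[OF fin Ksub subgroup_self Kc])
  then have "card E * q ^ multiplicity q (order G) dvd order G"
    using cK cP unfolding order_def by simp
  then have "\<not> q dvd card E" by (rule index_not_dvd[OF fin q])
  then have "card {T \<in> E. \<forall>g\<in>carrier (G\<lparr>carrier := W\<rparr>). ?\<phi> g T = T} \<noteq> 0"
    using md by (metis dvd_eq_mod_eq_0 mod_0)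
  then have "{T \<in> E. \<forall>g\<in>carrier (G\<lparr>carrier := W\<rparr>). ?\<phi> g T = T} \<noteq> {}"
    by (metis card.empty)
  then obtain T where T: "T \<in> E" "\<forall>g\<in>W. T #> inv g = T"
    by auto
  obtain a where a: "a \<in> K" "T = P #> a" using T(1) unfolding E_def by blast
  have ac: "a \<in> carrier G" by (rule subsetD[OF Kc a(1)])
  have e1: "T #> inv x = T" using T(2) xW by blast
  have e2: "T #> inv x = P #> (a \<otimes> inv x)"
    unfolding a(2) using ac x Pc by (simp add: coset_mult_assoc)
  have "P #> (a \<otimes> inv x) = T #> inv x" using e2 by simp
  also have "\<dots> = T" by (rule e1)
  also have "\<dots> = P #> a" by (rule a(2))
  finally have eq: "P #> (a \<otimes> inv x) = P #> a" .
  have aic: "a \<otimes> inv x \<in> carrier G" using ac x by simp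
  have "a \<otimes> inv x \<in> P #> a" by (rule repr_independenceD[OF P aic]) (use eq in simp)
  then have "a \<otimes> inv x \<otimes> inv a \<in> P" by (rule subgroup.rcos_module_imp[OF P is_group ac])
  moreover have "a \<otimes> inv x \<otimes> inv a = inv x"
  proof -
    have "a \<otimes> x = x \<otimes> a" using a(1) unfolding K_def centralizer_def by simp
    then have "a \<otimes> inv x = inv x \<otimes> a" by (rule comm_inv_right[OF ac x])
    then have "a \<otimes> inv x \<otimes> inv a = inv x \<otimes> a \<otimes> inv a" by simp
    then show ?thesis using ac x by (simp add: gsimps)
  qed
  ultimately have "inv x \<in> P" by simp
  then have "inv (inv x) \<in> P" by (rule subgroup.m_inv_closed[OF P])
  then show ?thesis using x by simp
qed




lemma center_sub_eq:
  "center (G\<lparr>carrier := Q\<rparr>) = {g \<in> Q. \<forall>s\<in>Q. g \<otimes>\<^bsub>G\<^esub> s = s \<otimes>\<^bsub>G\<^esub> g}"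
  unfolding center_def centralizer_def by simp

lemma (in group) qelem_central:
  assumes fin: "finite (carrier G)" and q: "Factorial_Ring.prime (q::nat)"
    and Q: "subgroup Q G" and cQ: "card Q = q ^ multiplicity q (order G)"
    and ZZ: "center (G\<lparr>carrier := Q\<rparr>) \<subseteq> center G"
    and x: "x \<in> carrier G" and xq: "x [^] (q ^ e) = \<one>"
    and nd: "\<not> q dvd card (conj_class G x)"
  shows "x \<in> center (G\<lparr>carrier := Q\<rparr>)"
proof -
  define K where "K = centralizer G {x}"
  have Ksub: "subgroup K G" unfolding K_def by (rule centralizer_subgroup) (use x in simp)
  have Kc: "K \<subseteq> carrier G" using Ksub subgroup.subset by blast
  have ck: "card (conj_class G x) * card K = order G" unfolding K_def by (rule card_conj_class[OF fin x])
  have o0: "order G \<noteq> 0" by (rule order_pos[OF fin])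
  have c0: "card (conj_class G x) \<noteq> 0" "card K \<noteq> 0" using ck o0 by (metis mult_zero_left, metis mult_zero_right)
  have "multiplicity q (order G) = multiplicity q (card (conj_class G x)) + multiplicity q (card K)"
    unfolding ck[symmetric]
    by (rule prime_elem_multiplicity_mult_distrib[OF prime_imp_prime_elem[OF q] c0])
  also have "multiplicity q (card (conj_class G x)) = 0" by (rule not_dvd_imp_multiplicity_0[OF nd])
  finally have mK: "multiplicity q (card K) = multiplicity q (order G)" by simp
  obtain R where R: "subgroup R G" "R \<subseteq> K" "card R = q ^ multiplicity q (card K)"
    using sylow_in[OF fin q Ksub] by blast
  have Rc: "R \<subseteq> carrier G" using R(1) subgroup.subset by blast
  have commR: "x \<otimes> r = r \<otimes> x" if hr: "r \<in> R" for r
  proof -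
    have "r \<in> K" using hr R(2) by blast
    then show ?thesis unfolding K_def centralizer_def by simp
  qed
  have xR: "x \<in> R"
    by (rule qelem_in_sylow[OF fin q x xq R(1)]) (use R(3) mK commR in simp_all)
  obtain a where a: "a \<in> carrier G" "(\<lambda>p. a \<otimes> p \<otimes> inv a) ` R = Q"
    using sylow_conj[OF fin q R(1) Q] R(3) mK cQ by auto
  define y where "y = a \<otimes> x \<otimes> inv a"
  have yQ: "y \<in> Q" unfolding y_def using a(2) xR by blast
  have ycomm: "y \<otimes> s = s \<otimes> y" if hs: "s \<in> Q" for s
  proof -
    obtain r where r: "r \<in> R" "s = a \<otimes> r \<otimes> inv a" using hs a(2) by blast
    have rc: "r \<in> carrier G" by (rule subsetD[OF Rc r(1)])
    have "y \<otimes> s = a \<otimes> (x \<otimes> r) \<otimes> inv a" unfolding y_def r(2) using a(1) x rc by (simp add: gsimps)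
    also have "\<dots> = a \<otimes> (r \<otimes> x) \<otimes> inv a" using commR[OF r(1)] by simp
    also have "\<dots> = s \<otimes> y" unfolding y_def r(2) using a(1) x rc by (simp add: gsimps)
    finally show ?thesis .
  qed
  have yZ: "y \<in> center (G\<lparr>carrier := Q\<rparr>)" unfolding center_sub_eq using yQ ycomm by simp
  then have "y \<in> center G" using ZZ by blast
  then have ya: "y \<otimes> a = a \<otimes> y" using a(1) unfolding center_def centralizer_def by simp
  have yc: "y \<in> carrier G" unfolding y_def using a(1) x by simp
  have "x = inv a \<otimes> y \<otimes> a" unfolding y_def using a(1) x by (simp add: gsimps)
  also have "\<dots> = inv a \<otimes> (a \<otimes> y)" using ya a(1) yc by (simp add: m_assoc)
  also have "\<dots> = y" using a(1) yc by (simp add: gsimps)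
  finally show ?thesis using yZ by simp
qed




lemma pi_dvd: "pi_number \<pi> n \<Longrightarrow> d dvd n \<Longrightarrow> pi_number \<pi> d"
  unfolding pi_number_def by (meson dvd_trans)

lemma pi_mult: "pi_number \<pi> a \<Longrightarrow> pi_number \<pi> b \<Longrightarrow> pi_number \<pi> (a * b)"
  unfolding pi_number_def by (meson prime_dvd_mult_iff)

lemma pi_qpow:
  assumes "Factorial_Ring.prime (q::nat)" "q \<in> \<pi>"
  shows "pi_number \<pi> (q ^ k)"
  unfolding pi_number_def
proof (intro allI impI)
  fix p :: nat assume p: "Factorial_Ring.prime p" "p dvd q ^ k"
  then have "p dvd q" by (rule prime_dvd_power)
  then have "p = q" using primes_dvd_imp_eq p(1) assms(1) by blast
  then show "p \<in> \<pi>" using assms(2) by simp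
qed

lemma pi_coprime_one:
  assumes "pi_number \<pi> (d::nat)" "\<forall>p\<in>\<pi>. \<not> p dvd n" "d dvd n" "d dvd m" "m \<noteq> 0"
  shows "d = 1"
proof (rule ccontr)
  assume "d \<noteq> 1"
  then obtain p where p: "Factorial_Ring.prime p" "p dvd d" using prime_factor_nat by blast
  then have "p \<in> \<pi>" using assms(1) unfolding pi_number_def by blast
  moreover have "p dvd n" using p(2) assms(3) by (rule dvd_trans)
  ultimately show False using assms(2) by blast
qed

lemma (in group) pi_elem_in_hall:
  assumes fin: "finite (carrier G)"
    and C: "subgroup C G" and H: "subgroup H G" and HC: "H \<subseteq> C"
    and nrm: "\<forall>k\<in>C. \<forall>h\<in>H. k \<otimes> h \<otimes> inv k \<in> H"
    and hall: "\<forall>p\<in>\<pi>. \<not> p dvd (card C div card H)"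
    and h: "h \<in> C" and pi: "pi_number \<pi> (ord h)"
  shows "h \<in> H"
proof -
  interpret C': group "G\<lparr>carrier := C\<rparr>" using subgroup_imp_group C by blast
  have Cc: "C \<subseteq> carrier G" using C subgroup.subset by blast
  have hc: "h \<in> carrier G" by (rule subsetD[OF Cc h])
  have HsubC: "subgroup H (G\<lparr>carrier := C\<rparr>)" by (rule subgroup_incl[OF H C HC])
  have "H \<lhd> G\<lparr>carrier := C\<rparr>"
    unfolding C'.normal_inv_iff
  proof (intro conjI ballI)
    show "subgroup H (G\<lparr>carrier := C\<rparr>)" by (rule HsubC)
    fix x h' assume x: "x \<in> carrier (G\<lparr>carrier := C\<rparr>)" and h': "h' \<in> H"
    have xC: "x \<in> C" using x by simp
    have "inv\<^bsub>G\<lparr>carrier := C\<rparr>\<^esub> x = inv x" by (rule m_inv_consistent[OF C xC])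
    then show "x \<otimes>\<^bsub>G\<lparr>carrier := C\<rparr>\<^esub> h' \<otimes>\<^bsub>G\<lparr>carrier := C\<rparr>\<^esub> inv\<^bsub>G\<lparr>carrier := C\<rparr>\<^esub> x \<in> H"
      using nrm xC h' by simp
  qed
  then interpret N: normal H "G\<lparr>carrier := C\<rparr>" .
  interpret F: group "G\<lparr>carrier := C\<rparr> Mod H" by (rule N.factorgroup_is_group)
  define hH where "hH = H #>\<^bsub>G\<lparr>carrier := C\<rparr>\<^esub> h"
  have Hc': "H \<subseteq> carrier (G\<lparr>carrier := C\<rparr>)" using HsubC subgroup.subset by blast
  have hC': "h \<in> carrier (G\<lparr>carrier := C\<rparr>)" using h by simp
  have hHc: "hH \<in> carrier (G\<lparr>carrier := C\<rparr> Mod H)"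
    unfolding hH_def FactGroup_def partial_object.select_convs by (rule C'.rcosetsI[OF Hc' hC'])
  have "hH [^]\<^bsub>G\<lparr>carrier := C\<rparr> Mod H\<^esub> ord h = H #>\<^bsub>G\<lparr>carrier := C\<rparr>\<^esub> (h [^]\<^bsub>G\<lparr>carrier := C\<rparr>\<^esub> ord h)"
    unfolding hH_def by (rule N.FactGroup_pow) (use h in simp)
  also have "h [^]\<^bsub>G\<lparr>carrier := C\<rparr>\<^esub> ord h = h [^] ord h" by (simp add: nat_pow_consistent[symmetric])
  also have "\<dots> = \<one>" using hc by simp
  also have "H #>\<^bsub>G\<lparr>carrier := C\<rparr>\<^esub> \<one> = H"
    using C'.coset_mult_one[OF Hc'] by simp
  finally have "hH [^]\<^bsub>G\<lparr>carrier := C\<rparr> Mod H\<^esub> ord h = \<one>\<^bsub>G\<lparr>carrier := C\<rparr> Mod H\<^esub>" by simp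
  then have d1: "F.ord hH dvd ord h" using F.pow_eq_id[OF hHc] by simp
  have d2: "F.ord hH dvd order (G\<lparr>carrier := C\<rparr> Mod H)" by (rule F.ord_dvd_group_order[OF hHc])
  have L: "card (rcosets\<^bsub>G\<lparr>carrier := C\<rparr>\<^esub> H) * card H = card C"
    using C'.lagrange[OF HsubC] by (simp add: order_def)
  moreover have "card H \<noteq> 0"
  proof -
    have "finite H" using fin H subgroup.subset finite_subset by blast
    moreover have "\<one> \<in> H" using H subgroup.one_closed by blast
    ultimately show ?thesis by auto
  qed
  ultimately have eqR: "card (rcosets\<^bsub>G\<lparr>carrier := C\<rparr>\<^esub> H) = card C div card H"
    by (metis nonzero_mult_div_cancel_right)
  then have oF: "order (G\<lparr>carrier := C\<rparr> Mod H) = card C div card H"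
    unfolding order_def FactGroup_def by simp
  have C0: "card C \<noteq> 0"
  proof -
    have "finite C" using fin Cc finite_subset by blast
    then show ?thesis using h by auto
  qed
  have "card (rcosets\<^bsub>G\<lparr>carrier := C\<rparr>\<^esub> H) \<noteq> 0"
  proof
    assume "card (rcosets\<^bsub>G\<lparr>carrier := C\<rparr>\<^esub> H) = 0"
    then have "card C = 0" using L by simp
    then show False using C0 by simp
  qed
  then have "card C div card H \<noteq> 0" using eqR by simp
  have "F.ord hH = 1"
    by (rule pi_coprime_one[OF pi_dvd[OF pi d1] hall, where m = "card C div card H"])
       (use d2 oF \<open>card C div card H \<noteq> 0\<close> in simp_all)
  then have "hH = \<one>\<^bsub>G\<lparr>carrier := C\<rparr> Mod H\<^esub>" using F.ord_eq_1[OF hHc] by simp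
  then have "hH = H" by simp
  moreover have "h \<in> hH" unfolding hH_def by (rule C'.rcos_self) (use h HsubC in simp_all)
  ultimately show ?thesis by simp
qed




lemma (in group) subgroup_pow_closed:
  assumes H: "subgroup H G" and x: "x \<in> H"
  shows "x [^] (n::nat) \<in> H"
proof (induction n)
  case 0 then show ?case using subgroup.one_closed[OF H] by simp
next
  case (Suc n)
  have "x [^] n \<otimes> x \<in> H" by (rule subgroup.m_closed[OF H Suc x])
  then show ?case by simp
qed

locale prop37 = group G for G (structure) +
  fixes \<pi> :: "nat set" and q :: nat and Q H
  assumes fin: "finite (carrier G)" and q: "Factorial_Ring.prime q" and qpi: "q \<in> \<pi>"
    and Q: "subgroup Q G" and cQ: "card Q = q ^ multiplicity q (order G)"
    and ZZ: "center (G\<lparr>carrier := Q\<rparr>) \<subseteq> center G"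
    and H: "subgroup H G" and HC: "H \<subseteq> centralizer G Q"
    and piH: "pi_number \<pi> (card H)"
    and hall: "\<forall>p\<in>\<pi>. \<not> p dvd (card (centralizer G Q) div card H)"
    and nrm: "\<forall>k\<in>centralizer G Q. \<forall>h\<in>H. k \<otimes> h \<otimes> inv k \<in> H"
begin

abbreviation "Z \<equiv> center (G\<lparr>carrier := Q\<rparr>)"
abbreviation "CQ \<equiv> centralizer G Q"

lemma Qc: "Q \<subseteq> carrier G" using Q subgroup.subset by blast
lemma Hc: "H \<subseteq> carrier G" using H subgroup.subset by blast
lemma CQsub: "subgroup CQ G" by (rule centralizer_subgroup[OF Qc])

lemma Z_eq: "Z = Q \<inter> CQ"
  unfolding center_sub_eq centralizer_def using Qc by auto

lemma Zsub: "subgroup Z G"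
  unfolding Z_eq by (rule subgroups_Inter_pair[OF Q CQsub])

lemma ZQ: "Z \<subseteq> Q" unfolding Z_eq by blast
lemma ZC: "Z \<subseteq> CQ" unfolding Z_eq by blast
lemma Zc: "Z \<subseteq> carrier G" using ZQ Qc by blast

lemma Z_central: "z \<in> Z \<Longrightarrow> g \<in> carrier G \<Longrightarrow> z \<otimes> g = g \<otimes> z"
  using ZZ unfolding center_def centralizer_def by blast

lemma cZ: "\<exists>j. card Z = q ^ j"
proof -
  have "card Z dvd card Q" by (rule card_subgroup_dvd[OF fin Zsub Q ZQ])
  then have "card Z dvd q ^ multiplicity q (order G)" using cQ by simp
  then show ?thesis using divides_primepow_nat[OF q] by blast
qed

lemma pi_in_H: "h \<in> CQ \<Longrightarrow> pi_number \<pi> (ord h) \<Longrightarrow> h \<in> H"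
  by (rule pi_elem_in_hall[OF fin CQsub H HC nrm hall])

lemma Q_pow: "z \<in> Q \<Longrightarrow> z [^] (q ^ multiplicity q (order G)) = \<one>"
  using pow_card_subgroup[OF fin Q] cQ by simp

lemma Q_pi: "z \<in> Q \<Longrightarrow> pi_number \<pi> (ord z)"
proof -
  assume z: "z \<in> Q"
  have zc: "z \<in> carrier G" using z Qc by blast
  have "ord z dvd q ^ multiplicity q (order G)" using Q_pow[OF z] pow_eq_id[OF zc] by simp
  then show ?thesis using pi_dvd pi_qpow[OF q qpi] by blast
qed

lemma ZH: "Z \<subseteq> H"
proof
  fix z assume z: "z \<in> Z"
  show "z \<in> H" by (rule pi_in_H) (use z ZC ZQ Q_pi in blast)+
qed

lemma sylow_bound:
  assumes T: "subgroup T G" and TC: "T \<subseteq> CQ" and j: "card Z = q ^ j"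
  shows "\<not> q ^ Suc j dvd card T"
proof
  assume dv: "q ^ Suc j dvd card T"
  obtain R where R: "subgroup R G" "R \<subseteq> T" "card R = q ^ multiplicity q (card T)"
    using sylow_in[OF fin q T] by blast
  have Rc: "R \<subseteq> carrier G" using R(1) subgroup.subset by blast
  have RZ: "R \<subseteq> Z"
  proof
    fix r assume r: "r \<in> R"
    have rc: "r \<in> carrier G" by (rule subsetD[OF Rc r])
    have rC: "r \<in> CQ" using r R(2) TC by blast
    have "r [^] card R = \<one>" by (rule pow_card_subgroup[OF fin R(1) r])
    then have rq: "r [^] (q ^ multiplicity q (card T)) = \<one>" using R(3) by simp
    have "r \<in> Q"
    proof (rule qelem_in_sylow[OF fin q rc rq Q cQ])
      fix p assume "p \<in> Q"
      then show "r \<otimes> p = p \<otimes> r" using rC unfolding centralizer_def by blast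
    qed
    then show "r \<in> Z" unfolding Z_eq using rC by blast
  qed
  have finZ: "finite Z" using fin Zc finite_subset by blast
  have le1: "card R \<le> card Z" by (rule card_mono[OF finZ RZ])
  have "T \<noteq> {}" using T subgroup.one_closed by blast
  then have "card T \<noteq> 0" using fin T subgroup.subset finite_subset by (metis card_0_eq)
  then have "Suc j \<le> multiplicity q (card T)"
    using dv power_dvd_iff_le_multiplicity not_prime_unit q by blast
  then have le2: "q ^ Suc j \<le> card R" using R(3) q prime_gt_1_nat power_increasing by (metis less_imp_le_nat)
  have "q ^ Suc j \<le> q ^ j" using le1 le2 j by linarith
  then show False using q prime_gt_1_nat by (metis Suc_n_not_le_n power_le_imp_le_exp)
qed

lemma CQ_class: "h \<in> CQ \<Longrightarrow> \<not> q dvd card (conj_class G h)"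
proof -
  assume h: "h \<in> CQ"
  have hc: "h \<in> carrier G" using h unfolding centralizer_def by blast
  have Ksub: "subgroup (centralizer G {h}) G" by (rule centralizer_subgroup) (use hc in simp)
  have QK: "Q \<subseteq> centralizer G {h}"
  proof
    fix s assume s: "s \<in> Q"
    have sc: "s \<in> carrier G" by (rule subsetD[OF Qc s])
    have "h \<otimes> s = s \<otimes> h" using h s unfolding centralizer_def by blast
    then show "s \<in> centralizer G {h}" unfolding centralizer_def using sc by simp
  qed
  have "card Q dvd card (centralizer G {h})" by (rule card_subgroup_dvd[OF fin Q Ksub QK])
  then have "card (conj_class G h) * card Q dvd card (conj_class G h) * card (centralizer G {h})"
    by (rule mult_dvd_mono[OF dvd_refl])
  then have "card (conj_class G h) * q ^ multiplicity q (order G) dvd order G"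
    using card_conj_class[OF fin hc] cQ by simp
  then show ?thesis by (rule index_not_dvd[OF fin q])
qed

end




context prop37 begin

abbreviation "S \<equiv> S_qprime_pi G \<pi> q"

lemma S_iff: "g \<in> S \<longleftrightarrow> g \<in> carrier G \<and> pi_number \<pi> (ord g) \<and> \<not> q dvd card (conj_class G g)"
proof
  assume "g \<in> S"
  then obtain g0 where g0: "pi_element G \<pi> g0" "\<not> q dvd card (conj_class G g0)" "g \<in> conj_class G g0"
    unfolding S_qprime_pi_def by blast
  have g0c: "g0 \<in> carrier G" and pg0: "pi_number \<pi> (ord g0)" using g0(1) unfolding pi_element_def by auto
  obtain x where x: "x \<in> carrier G" "g = x \<otimes> g0 \<otimes> inv x" using g0(3) unfolding conj_class_def by blast
  have "conj_class G g = conj_class G g0" using conj_class_conj[OF x(1) g0c] x(2) by simp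
  moreover have "ord g = ord g0" using ord_conj[OF x(1) g0c] x(2) by simp
  moreover have "g \<in> carrier G" using x g0c by simp
  ultimately show "g \<in> carrier G \<and> pi_number \<pi> (ord g) \<and> \<not> q dvd card (conj_class G g)"
    using g0(2) pg0 by simp
next
  assume a: "g \<in> carrier G \<and> pi_number \<pi> (ord g) \<and> \<not> q dvd card (conj_class G g)"
  then have gc: "g \<in> carrier G" by blast
  have "\<one> \<otimes> g \<otimes> inv \<one> = g" using gc by simp
  have "g \<in> conj_class G g" unfolding conj_class_def
    by (rule CollectI, rule exI[where x="\<one>"]) (use gc in simp)
  moreover have "pi_element G \<pi> g" using a unfolding pi_element_def by simp
  ultimately show "g \<in> S" using a unfolding S_qprime_pi_def by blast
qed

lemma S_c: "S \<subseteq> carrier G" using S_iff by blast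

lemma S_conj: "g \<in> S \<Longrightarrow> y \<in> carrier G \<Longrightarrow> y \<otimes> g \<otimes> inv y \<in> S"
  using S_iff conj_class_conj ord_conj by simp

lemma S_Zmult:
  assumes g: "g \<in> S" and z: "z \<in> Z"
  shows "z \<otimes> g \<in> S"
proof -
  have gc: "g \<in> carrier G" using g S_iff by blast
  have zc: "z \<in> carrier G" using z Zc by blast
  have zg: "z \<otimes> g = g \<otimes> z" by (rule Z_central[OF z gc])
  have "(z \<otimes> g) [^] (ord z * ord g) = z [^] (ord z * ord g) \<otimes> g [^] (ord z * ord g)"
    by (rule pow_mult_distrib[OF zg zc gc])
  also have "z [^] (ord z * ord g) = \<one>" using zc by (simp add: nat_pow_pow[symmetric])
  also have "g [^] (ord z * ord g) = \<one>" using gc by (simp add: nat_pow_pow[symmetric] mult.commute[of "ord z"])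
  finally have "(z \<otimes> g) [^] (ord z * ord g) = \<one>" using gc by simp
  then have "ord (z \<otimes> g) dvd ord z * ord g" using pow_eq_id zc gc by simp
  moreover have "pi_number \<pi> (ord z * ord g)"
  proof (rule pi_mult)
    have "z \<in> Q" using z ZQ by blast
    then show "pi_number \<pi> (ord z)" by (rule Q_pi)
    show "pi_number \<pi> (ord g)" using g S_iff by blast
  qed
  ultimately have pi: "pi_number \<pi> (ord (z \<otimes> g))" by (rule pi_dvd[rotated])
  have cc: "conj_class G (z \<otimes> g) = (\<lambda>a. z \<otimes> a) ` conj_class G g"
  proof -
    have e: "x \<otimes> (z \<otimes> g) \<otimes> inv x = z \<otimes> (x \<otimes> g \<otimes> inv x)" if x: "x \<in> carrier G" for x
    proof -
      have "x \<otimes> (z \<otimes> g) \<otimes> inv x = (x \<otimes> z) \<otimes> g \<otimes> inv x" using x zc gc by (simp add: m_assoc)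
      also have "x \<otimes> z = z \<otimes> x" using Z_central[OF z x] by simp
      finally show ?thesis using x zc gc by (simp add: m_assoc)
    qed
    show ?thesis
    proof
      show "conj_class G (z \<otimes> g) \<subseteq> (\<lambda>a. z \<otimes> a) ` conj_class G g"
      proof
        fix b assume "b \<in> conj_class G (z \<otimes> g)"
        then obtain x where x: "x \<in> carrier G" "b = x \<otimes> (z \<otimes> g) \<otimes> inv x" unfolding conj_class_def by blast
        then have "b = z \<otimes> (x \<otimes> g \<otimes> inv x)" using e by simp
        moreover have "x \<otimes> g \<otimes> inv x \<in> conj_class G g" unfolding conj_class_def using x(1) by blast
        ultimately show "b \<in> (\<lambda>a. z \<otimes> a) ` conj_class G g" by blast
      qed
      show "(\<lambda>a. z \<otimes> a) ` conj_class G g \<subseteq> conj_class G (z \<otimes> g)"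
      proof
        fix b assume "b \<in> (\<lambda>a. z \<otimes> a) ` conj_class G g"
        then obtain x where x: "x \<in> carrier G" "b = z \<otimes> (x \<otimes> g \<otimes> inv x)" unfolding conj_class_def by blast
        then have "b = x \<otimes> (z \<otimes> g) \<otimes> inv x" using e by simp
        then show "b \<in> conj_class G (z \<otimes> g)" unfolding conj_class_def using x(1) by blast
      qed
    qed
  qed
  have "inj_on (\<lambda>a. z \<otimes> a) (conj_class G g)"
  proof (rule inj_onI)
    fix a b assume "a \<in> conj_class G g" "b \<in> conj_class G g" "z \<otimes> a = z \<otimes> b"
    moreover have "conj_class G g \<subseteq> carrier G" unfolding conj_class_def using gc by auto
    ultimately have "a \<in> carrier G" "b \<in> carrier G" "z \<otimes> a = z \<otimes> b" by auto
    then show "a = b" using zc by simp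
  qed
  then have "card (conj_class G (z \<otimes> g)) = card (conj_class G g)" using cc card_image by simp
  then show ?thesis using S_iff g pi zc gc by simp
qed

lemma conjcos:
  assumes y: "y \<in> carrier G" and g: "g \<in> carrier G"
  shows "(\<lambda>a. y \<otimes> a \<otimes> inv y) ` (Z #> g) = Z #> (y \<otimes> g \<otimes> inv y)"
proof -
  have e: "y \<otimes> (z \<otimes> g) \<otimes> inv y = z \<otimes> (y \<otimes> g \<otimes> inv y)" if z: "z \<in> Z" for z
  proof -
    have zc: "z \<in> carrier G" using z Zc by blast
    have "y \<otimes> (z \<otimes> g) \<otimes> inv y = (y \<otimes> z) \<otimes> g \<otimes> inv y" using y zc g by (simp add: m_assoc)
    also have "y \<otimes> z = z \<otimes> y" using Z_central[OF z y] by simp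
    finally show ?thesis using y zc g by (simp add: m_assoc)
  qed
  show ?thesis
  proof
    show "(\<lambda>a. y \<otimes> a \<otimes> inv y) ` (Z #> g) \<subseteq> Z #> (y \<otimes> g \<otimes> inv y)"
    proof
      fix b assume "b \<in> (\<lambda>a. y \<otimes> a \<otimes> inv y) ` (Z #> g)"
      then obtain z where z: "z \<in> Z" "b = y \<otimes> (z \<otimes> g) \<otimes> inv y" unfolding r_coset_def by blast
      then have "b = z \<otimes> (y \<otimes> g \<otimes> inv y)" using e by simp
      then show "b \<in> Z #> (y \<otimes> g \<otimes> inv y)" unfolding r_coset_def using z(1) by blast
    qed
    show "Z #> (y \<otimes> g \<otimes> inv y) \<subseteq> (\<lambda>a. y \<otimes> a \<otimes> inv y) ` (Z #> g)"
    proof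
      fix b assume "b \<in> Z #> (y \<otimes> g \<otimes> inv y)"
      then obtain z where z: "z \<in> Z" "b = z \<otimes> (y \<otimes> g \<otimes> inv y)" unfolding r_coset_def by blast
      then have "b = y \<otimes> (z \<otimes> g) \<otimes> inv y" using e by simp
      moreover have "z \<otimes> g \<in> Z #> g" unfolding r_coset_def using z(1) by blast
      ultimately show "b \<in> (\<lambda>a. y \<otimes> a \<otimes> inv y) ` (Z #> g)" by blast
    qed
  qed
qed

end




context prop37 begin

lemma fixed_in_H:
  assumes g: "g \<in> S" and fx: "\<forall>y\<in>Q. Z #> (y \<otimes> g \<otimes> inv y) = Z #> g"
  shows "g \<in> H"
proof -
  have gc: "g \<in> carrier G" using g S_iff by blast
  have pig: "pi_number \<pi> (ord g)" using g S_iff by blast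
  have ndg: "\<not> q dvd card (conj_class G g)" using g S_iff by blast
  define m0 where "m0 = ord g"
  have m0pos: "m0 \<noteq> 0" unfolding m0_def using ord_ge_1[OF fin gc] by simp
  define a where "a = multiplicity q m0"
  define b where "b = m0 div q ^ a"
  have hm: "m0 = q ^ a * b" unfolding b_def a_def by (simp add: multiplicity_dvd)
  have b0: "b \<noteq> 0" using hm m0pos by auto
  have nb: "\<not> q dvd b"
  proof
    assume "q dvd b"
    then obtain k where "b = q * k" by (elim dvdE)
    then have "m0 = q ^ Suc a * k" using hm by (simp add: mult_ac)
    then have "q ^ Suc a dvd m0" by simp
    then show False using mult_not_dvd[OF q m0pos] unfolding a_def by blast
  qed
  have cop: "coprime (q ^ i) b" for i
  proof -
    have "coprime q b" using prime_imp_coprime[OF q nb] .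
    then show ?thesis by simp
  qed
  have gm0: "g [^] m0 = \<one>" unfolding m0_def using gc by simp
  define g1 where "g1 = g [^] b"
  have g1c: "g1 \<in> carrier G" unfolding g1_def using gc by simp
  have g1q: "g1 [^] (q ^ a) = \<one>"
    unfolding g1_def using gc gm0 hm by (simp add: nat_pow_pow mult.commute)
  have nd1: "\<not> q dvd card (conj_class G g1)"
  proof
    assume qd: "q dvd card (conj_class G g1)"
    have K: "subgroup (centralizer G {g}) G" by (rule centralizer_subgroup) (use gc in simp)
    have K1: "subgroup (centralizer G {g1}) G" by (rule centralizer_subgroup) (use g1c in simp)
    have KK: "centralizer G {g} \<subseteq> centralizer G {g1}"
    proof
      fix x assume x: "x \<in> centralizer G {g}"
      have xc: "x \<in> carrier G" using x unfolding centralizer_def by blast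
      have "x \<otimes> g = g \<otimes> x" using x unfolding centralizer_def by blast
      then have "g [^] b \<otimes> x = x \<otimes> g [^] b" using group_commutes_pow[of g x b] gc xc by simp
      then show "x \<in> centralizer G {g1}" unfolding centralizer_def g1_def using xc by simp
    qed
    have "card (centralizer G {g}) dvd card (centralizer G {g1})"
      by (rule card_subgroup_dvd[OF fin K K1 KK])
    then obtain k where k: "card (centralizer G {g1}) = card (centralizer G {g}) * k" by (elim dvdE)
    have e1: "card (conj_class G g) * card (centralizer G {g}) = order G" by (rule card_conj_class[OF fin gc])
    have e2: "card (conj_class G g1) * card (centralizer G {g1}) = order G" by (rule card_conj_class[OF fin g1c])
    have "card (centralizer G {g}) \<noteq> 0" using e1 order_pos[OF fin] by (metis mult_zero_right)
    moreover have "card (conj_class G g) * card (centralizer G {g}) = (card (conj_class G g1) * k) * card (centralizer G {g})"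
      using e1 e2 k by (simp add: mult_ac)
    ultimately have "card (conj_class G g) = card (conj_class G g1) * k" by simp
    then have "q dvd card (conj_class G g)" using qd by simp
    then show False using ndg by simp
  qed
  have g1Z: "g1 \<in> Z" by (rule qelem_central[OF fin q Q cQ ZZ g1c g1q nd1])
  define g2 where "g2 = g [^] (q ^ a)"
  have g2c: "g2 \<in> carrier G" unfolding g2_def using gc by simp
  have g2comm: "g2 \<otimes> y = y \<otimes> g2" if y: "y \<in> Q" for y
  proof -
    have yc: "y \<in> carrier G" by (rule subsetD[OF Qc y])
    define c where "c = y \<otimes> g \<otimes> inv y \<otimes> inv g"
    have ygc: "y \<otimes> g \<otimes> inv y \<in> carrier G" using yc gc by simp
    have "Z #> g = Z #> (y \<otimes> g \<otimes> inv y)" using fx y by simp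
    then have "y \<otimes> g \<otimes> inv y \<in> Z #> g" by (rule repr_independenceD[OF Zsub ygc])
    then have cZ: "c \<in> Z" unfolding c_def by (rule subgroup.rcos_module_imp[OF Zsub is_group gc])
    have cc: "c \<in> carrier G" using cZ Zc by blast
    have ycg: "y \<otimes> g \<otimes> inv y = c \<otimes> g" unfolding c_def using yc gc by (simp add: m_assoc)
    have cg: "c \<otimes> g = g \<otimes> c" by (rule Z_central[OF cZ gc])
    have "(c \<otimes> g) [^] m0 = c [^] m0 \<otimes> g [^] m0" by (rule pow_mult_distrib[OF cg cc gc])
    moreover have "(c \<otimes> g) [^] m0 = \<one>" unfolding ycg[symmetric] using conj_pow[OF yc gc] gm0 yc by simp
    ultimately have "c [^] m0 = \<one>" using gm0 cc by simp
    then have d1: "ord c dvd q ^ a * b" using pow_eq_id[OF cc] hm by simp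
    have "c \<in> Q" using cZ ZQ by blast
    then have "c [^] (q ^ multiplicity q (order G)) = \<one>" by (rule Q_pow)
    then have "ord c dvd q ^ multiplicity q (order G)" using pow_eq_id[OF cc] by simp
    then obtain i where i: "ord c = q ^ i" using divides_primepow_nat[OF q] by blast
    have "ord c dvd q ^ a" using d1 cop[of i] i by (simp add: coprime_dvd_mult_left_iff)
    then have cqa: "c [^] (q ^ a) = \<one>" using pow_eq_id[OF cc] by simp
    have "y \<otimes> g2 \<otimes> inv y = (y \<otimes> g \<otimes> inv y) [^] (q ^ a)" unfolding g2_def using conj_pow[OF yc gc] by simp
    also have "\<dots> = c [^] (q ^ a) \<otimes> g [^] (q ^ a)" unfolding ycg by (rule pow_mult_distrib[OF cg cc gc])
    also have "\<dots> = g2" unfolding g2_def using cqa gc by simp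
    finally have "y \<otimes> g2 \<otimes> inv y = g2" .
    then have "y \<otimes> g2 \<otimes> inv y \<otimes> y = g2 \<otimes> y" by simp
    then show ?thesis using yc g2c by (simp add: gsimps)
  qed
  have g2C: "g2 \<in> CQ" unfolding centralizer_def using g2c g2comm by simp
  have "g2 [^] m0 = \<one>" unfolding g2_def using gc gm0 by (simp add: nat_pow_pow mult.commute[of "q ^ a"] nat_pow_pow[symmetric])
  then have "ord g2 dvd m0" using pow_eq_id[OF g2c] by simp
  then have "pi_number \<pi> (ord g2)" using pig unfolding m0_def by (rule pi_dvd[rotated])
  then have g2H: "g2 \<in> H" by (rule pi_in_H[OF g2C])
  obtain u v where uv: "b * u = q ^ a * v + gcd b (q ^ a)" using bezout_nat[OF b0] by blast
  have "gcd b (q ^ a) = 1" using cop[of a] by (simp add: coprime_imp_gcd_eq_1 coprime_commute)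
  then have uv1: "b * u = q ^ a * v + 1" using uv by simp
  have "g1 [^] u = g [^] (b * u)" unfolding g1_def using gc by (simp add: nat_pow_pow)
  also have "\<dots> = g [^] (q ^ a * v) \<otimes> g" unfolding uv1 using gc by (simp add: nat_pow_mult[symmetric])
  also have "g [^] (q ^ a * v) = g2 [^] v" unfolding g2_def using gc by (simp add: nat_pow_pow)
  finally have e: "g1 [^] u = g2 [^] v \<otimes> g" .
  have "g = inv (g2 [^] v) \<otimes> g1 [^] u" unfolding e using g2c gc by (simp add: gsimps)
  moreover have "g1 [^] u \<in> H" using subgroup_pow_closed[OF H] g1Z ZH by blast
  moreover have "inv (g2 [^] v) \<in> H" using subgroup.m_inv_closed[OF H subgroup_pow_closed[OF H g2H]] .
  ultimately show ?thesis using subgroup.m_closed[OF H] by metis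
qed

end




context prop37 begin

lemma main_S:
  assumes j: "card Z = q ^ j"
  shows "q_part q (card S) = q ^ j"
proof -
  define E where "E = {Z #> g | g. g \<in> S}"
  have finS: "finite S" using S_c fin finite_subset by blast
  have cS: "card S = card E * card Z"
    unfolding E_def
  proof (rule card_union_cosets[OF fin Zsub S_c])
    fix t assume t: "t \<in> S"
    show "Z #> t \<subseteq> S"
    proof
      fix x assume "x \<in> Z #> t"
      then obtain z where z: "z \<in> Z" "x = z \<otimes> t" unfolding r_coset_def by blast
      then show "x \<in> S" using S_Zmult[OF t z(1)] by simp
    qed
  qed
  interpret A: group "G\<lparr>carrier := Q\<rparr>" using subgroup_imp_group Q by blast
  have oA: "order (G\<lparr>carrier := Q\<rparr>) = q ^ multiplicity q (order G)" using cQ by (simp add: order_def)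
  have finA: "finite (carrier (G\<lparr>carrier := Q\<rparr>))" using fin Qc finite_subset by auto
  let ?\<phi> = "\<lambda>y W. (\<lambda>a. y \<otimes> a \<otimes> inv y) ` W"
  have finE: "finite E"
  proof -
    have "E = (\<lambda>g. Z #> g) ` S" unfolding E_def by blast
    then show ?thesis using finS by simp
  qed
  have Ec: "W \<subseteq> carrier G" if hW: "W \<in> E" for W
  proof -
    obtain g where g: "g \<in> S" "W = Z #> g" using hW unfolding E_def by blast
    have "g \<in> carrier G" using g(1) S_c by blast
    then show ?thesis using r_coset_subset_G[OF Zc] g(2) by simp
  qed
  have cl: "?\<phi> y W \<in> E" if hy: "y \<in> carrier (G\<lparr>carrier := Q\<rparr>)" and hW: "W \<in> E" for y W
  proof -
    obtain g where g: "g \<in> S" "W = Z #> g" using hW unfolding E_def by blast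
    have gc: "g \<in> carrier G" using g(1) S_c by blast
    have yc: "y \<in> carrier G" using hy Qc by auto
    have "?\<phi> y W = Z #> (y \<otimes> g \<otimes> inv y)" unfolding g(2) by (rule conjcos[OF yc gc])
    moreover have "y \<otimes> g \<otimes> inv y \<in> S" by (rule S_conj[OF g(1) yc])
    ultimately show ?thesis unfolding E_def by blast
  qed
  have one: "?\<phi> \<one>\<^bsub>G\<lparr>carrier := Q\<rparr>\<^esub> W = W" if hW: "W \<in> E" for W
  proof -
    have "?\<phi> \<one> W = (\<lambda>a. a) ` W"
      by (rule image_cong) (use Ec[OF hW] in auto)
    then show ?thesis by simp
  qed
  have comp: "?\<phi> (g \<otimes>\<^bsub>G\<lparr>carrier := Q\<rparr>\<^esub> h) W = ?\<phi> g (?\<phi> h W)"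
    if hg: "g \<in> carrier (G\<lparr>carrier := Q\<rparr>)" and hh: "h \<in> carrier (G\<lparr>carrier := Q\<rparr>)" and hW: "W \<in> E" for g h W
  proof -
    have gc: "g \<in> carrier G" "h \<in> carrier G" using hg hh Qc by auto
    have "?\<phi> g (?\<phi> h W) = (\<lambda>a. g \<otimes> (h \<otimes> a \<otimes> inv h) \<otimes> inv g) ` W" by (simp add: image_image)
    also have "\<dots> = (\<lambda>a. (g \<otimes> h) \<otimes> a \<otimes> inv (g \<otimes> h)) ` W"
      by (rule image_cong) (use Ec[OF hW] gc in \<open>auto simp: gsimps\<close>)
    finally show ?thesis by simp
  qed
  define F where "F = {W \<in> E. \<forall>y\<in>carrier (G\<lparr>carrier := Q\<rparr>). ?\<phi> y W = W}"
  have md: "card E mod q = card F mod q"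
    unfolding F_def by (rule action_fix_mod[OF A.is_group finA q oA finE cl one comp])
  have hS: "h \<in> S" if h: "h \<in> H" for h
  proof -
    have hc: "h \<in> carrier G" by (rule subsetD[OF Hc h])
    have "h [^] card H = \<one>" by (rule pow_card_subgroup[OF fin H h])
    then have "ord h dvd card H" using pow_eq_id[OF hc] by simp
    then have "pi_number \<pi> (ord h)" using piH by (rule pi_dvd[rotated])
    moreover have "\<not> q dvd card (conj_class G h)" by (rule CQ_class) (use h HC in blast)
    ultimately show ?thesis using S_iff hc by simp
  qed
  have FH: "F = {Z #> h | h. h \<in> H}"
  proof
    show "F \<subseteq> {Z #> h | h. h \<in> H}"
    proof
      fix W assume W: "W \<in> F"
      then obtain g where g: "g \<in> S" "W = Z #> g" unfolding F_def E_def by blast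
      have gc: "g \<in> carrier G" using g(1) S_c by blast
      have "\<forall>y\<in>Q. Z #> (y \<otimes> g \<otimes> inv y) = Z #> g"
      proof
        fix y assume y: "y \<in> Q"
        have yc: "y \<in> carrier G" by (rule subsetD[OF Qc y])
        have "?\<phi> y W = W" using W y unfolding F_def by simp
        then show "Z #> (y \<otimes> g \<otimes> inv y) = Z #> g" using conjcos[OF yc gc] g(2) by simp
      qed
      then have "g \<in> H" by (rule fixed_in_H[OF g(1)])
      then show "W \<in> {Z #> h | h. h \<in> H}" using g(2) by blast
    qed
    show "{Z #> h | h. h \<in> H} \<subseteq> F"
    proof
      fix W assume "W \<in> {Z #> h | h. h \<in> H}"
      then obtain h where h: "h \<in> H" "W = Z #> h" by blast
      have hc: "h \<in> carrier G" by (rule subsetD[OF Hc h(1)])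
      have WE: "W \<in> E" unfolding E_def using hS[OF h(1)] h(2) by blast
      have "?\<phi> y W = W" if y: "y \<in> carrier (G\<lparr>carrier := Q\<rparr>)" for y
      proof -
        have yQ: "y \<in> Q" using y by simp
        have yc: "y \<in> carrier G" by (rule subsetD[OF Qc yQ])
        have "h \<otimes> y = y \<otimes> h" using h(1) HC yQ unfolding centralizer_def by blast
        then have "y \<otimes> h \<otimes> inv y = h \<otimes> y \<otimes> inv y" by simp
        also have "\<dots> = h" using hc yc by (simp add: gsimps)
        finally have "y \<otimes> h \<otimes> inv y = h" .
        then show ?thesis unfolding h(2) using conjcos[OF yc hc] by simp
      qed
      then show "W \<in> F" unfolding F_def using WE by blast
    qed
  qed
  have cH: "card H = card F * card Z"
    unfolding FH
  proof (rule card_union_cosets[OF fin Zsub Hc])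
    fix t assume t: "t \<in> H"
    show "Z #> t \<subseteq> H"
    proof
      fix x assume "x \<in> Z #> t"
      then obtain z where z: "z \<in> Z" "x = z \<otimes> t" unfolding r_coset_def by blast
      have "z \<in> H" using z(1) ZH by blast
      then have "z \<otimes> t \<in> H" by (rule subgroup.m_closed[OF H _ t])
      then show "x \<in> H" using z(2) by simp
    qed
  qed
  have nF: "\<not> q dvd card F"
  proof
    assume "q dvd card F"
    then obtain k where "card F = q * k" by (elim dvdE)
    then have "card H = q ^ Suc j * k" using cH j by (simp add: mult_ac)
    then have "q ^ Suc j dvd card H" by simp
    then show False using sylow_bound[OF H HC j] by blast
  qed
  have nE: "\<not> q dvd card E" using md nF by (simp add: dvd_eq_mod_eq_0)
  have "card S = card E * q ^ j" using cS j by simp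
  then show ?thesis unfolding q_part_def using qpart_mult[OF q nE] by simp
qed

lemma main_center:
  assumes j: "card Z = q ^ j"
  shows "q_part q (card (center G)) = q ^ j"
proof -
  have Csub: "subgroup (center G) G" unfolding center_def by (rule centralizer_subgroup) simp
  have Cc: "center G \<subseteq> carrier G" using Csub subgroup.subset by blast
  have cC: "card (center G) = card {Z #> t | t. t \<in> center G} * card Z"
  proof (rule card_union_cosets[OF fin Zsub Cc])
    fix t assume t: "t \<in> center G"
    show "Z #> t \<subseteq> center G"
    proof
      fix x assume "x \<in> Z #> t"
      then obtain z where z: "z \<in> Z" "x = z \<otimes> t" unfolding r_coset_def by blast
      have "z \<in> center G" using z(1) ZZ by blast
      then have "z \<otimes> t \<in> center G" by (rule subgroup.m_closed[OF Csub _ t])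
      then show "x \<in> center G" using z(2) by simp
    qed
  qed
  have CC: "center G \<subseteq> CQ"
  proof
    fix x assume x: "x \<in> center G"
    then have "x \<in> carrier G" "\<forall>s\<in>carrier G. x \<otimes> s = s \<otimes> x" unfolding center_def centralizer_def by auto
    then show "x \<in> CQ" unfolding centralizer_def using Qc by blast
  qed
  have nE: "\<not> q dvd card {Z #> t | t. t \<in> center G}"
  proof
    assume "q dvd card {Z #> t | t. t \<in> center G}"
    then obtain k where "card {Z #> t | t. t \<in> center G} = q * k" by (elim dvdE)
    then have "card (center G) = q ^ Suc j * k" using cC j by (simp add: mult_ac)
    then have "q ^ Suc j dvd card (center G)" by simp
    then show False using sylow_bound[OF Csub CC j] by blast
  qed
  have "card (center G) = card {Z #> t | t. t \<in> center G} * q ^ j" using cC j by simp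
  then show ?thesis unfolding q_part_def using qpart_mult[OF q nE] by simp
qed

lemma main: "q_part q (card (center G)) = q_part q (card S)"
  using main_S main_center cZ by metis

end


theorem proposition3p7:
  fixes G (structure) and \<pi> :: "nat set" and q :: nat and Q :: "'a set"
  assumes "group G" and "finite (carrier G)"
    and "\<forall>p\<in>\<pi>. Factorial_Ring.prime p" and "q \<in> \<pi>"
    and "sylow_subgroup G q Q"
    and "center (G\<lparr>carrier := Q\<rparr>) \<subseteq> center G"
    and "\<exists>H. hall_subgroup G \<pi> (centralizer G Q) H \<and> normal_in G H (centralizer G Q)"
  shows "q_part q (card (center G)) = q_part q (card (S_qprime_pi G \<pi> q))"
proof -
  have q: "Factorial_Ring.prime q" using assms(3,4) by blast
  obtain H where H: "hall_subgroup G \<pi> (centralizer G Q) H" "normal_in G H (centralizer G Q)"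
    using assms(7) by blast
  have QS: "subgroup Q G" "card Q = q ^ multiplicity q (order G)"
    using assms(5) unfolding sylow_subgroup_def q_part_def by auto
  have H1: "subgroup H G" and HC: "H \<subseteq> centralizer G Q" and piH: "pi_number \<pi> (card H)"
    and hall: "\<forall>p\<in>\<pi>. \<not> p dvd (card (centralizer G Q) div card H)"
    using H(1) unfolding hall_subgroup_def by auto
  have nrm: "\<forall>k\<in>centralizer G Q. \<forall>h\<in>H. k \<otimes> h \<otimes> inv k \<in> H"
    using H(2) unfolding normal_in_def by auto
  have ax: "prop37_axioms G \<pi> q Q H"
    by (rule prop37_axioms.intro[OF assms(2) q assms(4) QS(1) QS(2) assms(6) H1 HC piH hall nrm])
  interpret P: prop37 G \<pi> q Q H by (rule prop37.intro[OF assms(1) ax])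
  show ?thesis by (rule P.main)
qed

end
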